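(* Let $f$ be a periodic traveling wave of speed $c$ ($c^2\neq1$). If $|\operatorname{Re}\lambda|$ is sufficiently large, then $\operatorname{sgn}(G_p(\lambda))=\operatorname{sgn}(\gamma)$; i.e. $G_p(\lambda)>0$ for superluminal waves and $G_p(\lambda)<0$ for subluminal waves.
   Context: A traveling wave of speed $c$ ($c^2\neq1$) is a real solution $f$ of $(c^2-1)f''+\sin f=0$, with energy $E$ given by $\tfrac12(c^2-1)(f')^2+1-\cos f=E$; it is subluminal if $c^2<1$, superluminal if $c^2>1$; periodic traveling waves are librational ($0<E<2$) or rotational ($E<0$ if $c^2<1$, $E>2$ if $c^2>1$), with fundamental period $T$ (smallest $T>0$ with $f(z+T)=f(z)\pmod{2\pi}$). Let $\gamma=1/(c^2-1)$. Equation (P): $p''-2c\gamma\lambda p'+\gamma(\lambda^2+\cos f(z))p=0$, written as a first-order system for $(p,p')$ with fundamental matrix $F(z;\lambda)$, $F(0;\lambda)=I$; its Floquet multipliers $\rho_\pm(\lambda)$ are the eigenvalues of $F(T;\lambda)$. Define $G_p(\lambda)=\log|\rho_+(\lambda)|\log|\rho_-(\lambda)|$. *)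

theory Defs
  imports "HOL-Analysis.Analysis"
begin

definition traveling_wave :: "real \<Rightarrow> (real \<Rightarrow> real) \<Rightarrow> bool" where
  "traveling_wave c f \<longleftrightarrow> c\<^sup>2 \<noteq> 1 \<and>
     (\<exists>f' f''. \<forall>z. (f has_real_derivative f' z) (at z) \<and>
                   (f' has_real_derivative f'' z) (at z) \<and>
                   (c\<^sup>2 - 1) * f'' z + sin (f z) = 0)"

definition period_mod_2pi :: "(real \<Rightarrow> real) \<Rightarrow> real \<Rightarrow> bool" where
  "period_mod_2pi f T \<longleftrightarrow> (\<forall>z. \<exists>k::int. f (z + T) = f z + 2 * pi * of_int k)"

definition fundamental_period :: "(real \<Rightarrow> real) \<Rightarrow> real \<Rightarrow> bool" where
  "fundamental_period f T \<longleftrightarrow> T > 0 \<and> period_mod_2pi f T \<and>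
     (\<forall>S. 0 < S \<and> S < T \<longrightarrow> \<not> period_mod_2pi f S)"

definition gam :: "real \<Rightarrow> real" where
  "gam c = 1 / (c\<^sup>2 - 1)"

text \<open>Coefficient matrix of the first order system for (p, p') of equation (P):
  p'' - 2 c gamma lambda p' + gamma (lambda^2 + cos f) p = 0.\<close>
definition coeff_matrix :: "real \<Rightarrow> (real \<Rightarrow> real) \<Rightarrow> complex \<Rightarrow> real \<Rightarrow> complex^2^2" where
  "coeff_matrix c f lam z = (\<chi> i j.
     if i = 1 then (if j = 1 then 0 else 1)
     else (if j = 1 then - of_real (gam c) * (lam\<^sup>2 + of_real (cos (f z)))
           else 2 * of_real c * of_real (gam c) * lam))"

definition is_fundamental_matrix ::
  "real \<Rightarrow> (real \<Rightarrow> real) \<Rightarrow> complex \<Rightarrow> (real \<Rightarrow> complex^2^2) \<Rightarrow> bool" where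
  "is_fundamental_matrix c f lam F \<longleftrightarrow> F 0 = mat 1 \<and>
     (\<forall>z. (F has_vector_derivative (coeff_matrix c f lam z ** F z)) (at z))"

definition monodromy :: "real \<Rightarrow> (real \<Rightarrow> real) \<Rightarrow> real \<Rightarrow> complex \<Rightarrow> complex^2^2" where
  "monodromy c f T lam = (THE M. \<exists>F. is_fundamental_matrix c f lam F \<and> F T = M)"

definition floquet_multipliers :: "real \<Rightarrow> (real \<Rightarrow> real) \<Rightarrow> real \<Rightarrow> complex \<Rightarrow> complex \<times> complex" where
  "floquet_multipliers c f T lam = (SOME (r1, r2). \<forall>x::complex.
     det (mat x - monodromy c f T lam) = (x - r1) * (x - r2))"

definition G_p :: "real \<Rightarrow> (real \<Rightarrow> real) \<Rightarrow> real \<Rightarrow> complex \<Rightarrow> real" where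
  "G_p c f T lam = (case floquet_multipliers c f T lam of
     (r1, r2) \<Rightarrow> ln (cmod r1) * ln (cmod r2))"

end

theory Submission
  imports Defs
begin


definition Jint :: "(real \<Rightarrow> 'a::banach) \<Rightarrow> real \<Rightarrow> 'a" where
  "Jint g z = integral {0..z} g - integral {z..0} g"

lemma Jint_eq:
  fixes g :: "real \<Rightarrow> 'a::banach"
  assumes g: "continuous_on UNIV g" and N: "N \<ge> 0" and w: "w \<in> {-N..N}"
  shows "Jint g w = integral {-N..w} g - integral {-N..0} g"
proof (cases "w \<ge> 0")
  case True
  have i: "g integrable_on {-N..w}"
    by (rule integrable_continuous_real) (meson g continuous_on_subset subset_UNIV)
  have "integral {-N..0} g + integral {0..w} g = integral {-N..w} g"
    using Henstock_Kurzweil_Integration.integral_combine[OF _ _ i, of 0] True N by auto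
  moreover have "integral {w..0} g = 0" using True
    by (cases "w = 0") auto
  ultimately show ?thesis unfolding Jint_def by (simp add: algebra_simps)
next
  case False
  have i: "g integrable_on {-N..0}"
    by (rule integrable_continuous_real) (meson g continuous_on_subset subset_UNIV)
  have "integral {-N..w} g + integral {w..0} g = integral {-N..0} g"
    using Henstock_Kurzweil_Integration.integral_combine[OF _ _ i, of w] False w by auto
  moreover have "integral {0..w} g = 0" using False by auto
  ultimately show ?thesis unfolding Jint_def by (simp add: algebra_simps)
qed

lemma Jint_deriv:
  fixes g :: "real \<Rightarrow> 'a::banach"
  assumes g: "continuous_on UNIV g"
  shows "(Jint g has_vector_derivative g z) (at z)"
proof -
  define N where "N = \<bar>z\<bar> + 1"
  have N: "N \<ge> 0" "z \<in> {-N<..<N}" unfolding N_def by auto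
  have gc: "continuous_on {-N..N} g" by (meson g continuous_on_subset subset_UNIV)
  have "((\<lambda>w. integral {-N..w} g - integral {-N..0} g) has_vector_derivative g z) (at z within {-N..N})"
    using integral_has_vector_derivative[OF gc, of z] N
    by (auto intro!: derivative_eq_intros)
  then have "(Jint g has_vector_derivative g z) (at z within {-N..N})"
    by (rule has_vector_derivative_transform[rotated 2]) (use N Jint_eq[OF g N(1)] in auto)
  moreover have "z \<in> interior {-N..N}" using N by auto
  ultimately show ?thesis
    by (metis at_within_interior)
qed



lemma Hderiv:
  fixes C K :: real
  shows "((\<lambda>s. C*(K * s)^Suc n/fact (Suc n)) has_real_derivative C*K*(K * s)^n/fact n) (at s)"
proof -
  have e: "(\<lambda>s. C*(K * s)^Suc n/fact (Suc n)) = (\<lambda>s. (C*K^Suc n/fact (Suc n)) * s^Suc n)"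
    by (rule ext) (simp add: power_mult_distrib mult_ac)
  have "((\<lambda>s. (C*K^Suc n/fact (Suc n)) * s^Suc n) has_real_derivative
       (C*K^Suc n/fact (Suc n)) * (real (Suc n) * s^n)) (at s)"
    apply (rule DERIV_cmult) using DERIV_pow[of "Suc n" s] by simp
  moreover have "(C*K^Suc n/fact (Suc n)) * (real (Suc n) * s^n) = C*K*(K * s)^n/fact n"
    by (simp add: power_mult_distrib fact_Suc field_simps del: of_nat_Suc)
  ultimately show ?thesis unfolding e by metis
qed

lemma Hderiv':
  fixes C K :: real
  shows "((\<lambda>s. - (C*(K*(-s))^Suc n/fact (Suc n))) has_real_derivative C*K*(K*(-s))^n/fact n) (at s)"
proof -
  have h: "((\<lambda>s. C*(K * s)^Suc n/fact (Suc n)) has_real_derivative C*K*(K*(-s))^n/fact n) (at (-s))"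
    using Hderiv[of C K n "-s"] by simp
  have "((\<lambda>s. C*(K*(-s))^Suc n/fact (Suc n)) has_real_derivative - (C*K*(K*(-s))^n/fact n)) (at s)"
    using DERIV_mirror[THEN iffD1, OF h] by simp
  from DERIV_minus[OF this] show ?thesis by simp
qed

lemma Jint_bound:
  fixes g :: "real \<Rightarrow> 'a::banach"
  assumes g: "continuous_on UNIV g" and K: "K \<ge> 0" and C: "C \<ge> 0"
    and b: "\<And>s. norm (g s) \<le> C*K*(K*\<bar>s\<bar>)^n/fact n"
  shows "norm (Jint g z) \<le> C*(K*\<bar>z\<bar>)^Suc n/fact (Suc n)"
proof (cases "z \<ge> 0")
  case True
  have "integral {z..0} g = 0" using True by (cases "z = 0") auto
  then have e: "Jint g z = integral {0..z} g" unfolding Jint_def by simp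
  have hi: "((\<lambda>s. C*K*(K* s)^n/fact n) has_integral
      (C*(K*z)^Suc n/fact (Suc n) - C*(K*0)^Suc n/fact (Suc n))) {0..z}"
    apply (rule fundamental_theorem_of_calculus[OF True])
    using Hderiv[of C K n] by (auto simp: has_real_derivative_iff_has_vector_derivative[symmetric]
        intro: has_field_derivative_at_within)
  have "norm (integral {0..z} g) \<le> integral {0..z} (\<lambda>s. C*K*(K* s)^n/fact n)"
    apply (rule integral_norm_bound_integral)
      apply (rule integrable_continuous_real) apply (meson g continuous_on_subset subset_UNIV)
    using hi apply blast
    using b by (metis abs_of_nonneg atLeastAtMost_iff)
  also have "\<dots> = (C*(K*z)^Suc n/fact (Suc n) - C*(K*0)^Suc n/fact (Suc n))"
    by (rule integral_unique[OF hi])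
  finally show ?thesis using e True by simp
next
  case False
  have "integral {0..z} g = 0" using False by auto
  then have e: "Jint g z = - integral {z..0} g" unfolding Jint_def by simp
  have z: "z \<le> 0" using False by simp
  have hi: "((\<lambda>s. C*K*(K* (-s))^n/fact n) has_integral
      (- (C*(K*(-0))^Suc n/fact (Suc n)) - - (C*(K*(-z))^Suc n/fact (Suc n)))) {z..0}"
    apply (rule fundamental_theorem_of_calculus[OF z])
    using Hderiv'[of C K n] by (auto simp: has_real_derivative_iff_has_vector_derivative[symmetric]
        intro: has_field_derivative_at_within)
  have "norm (integral {z..0} g) \<le> integral {z..0} (\<lambda>s. C*K*(K* (-s))^n/fact n)"
    apply (rule integral_norm_bound_integral)
      apply (rule integrable_continuous_real) apply (meson g continuous_on_subset subset_UNIV)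
    using hi apply blast
    using b by (metis abs_of_nonpos atLeastAtMost_iff)
  also have "\<dots> = (- (C*(K*(-0))^Suc n/fact (Suc n)) - - (C*(K*(-z))^Suc n/fact (Suc n)))"
    by (rule integral_unique[OF hi])
  finally show ?thesis using e z by simp
qed



lemma summ_bound:
  fixes C x :: real
  shows "summable (\<lambda>n. C * x^n / fact n)"
proof -
  have "summable (\<lambda>n. C * (inverse (fact n) * x^n))"
    by (rule summable_mult[OF summable_exp])
  then show ?thesis by (simp add: field_simps)
qed

lemma lin_ode_exists:
  fixes M0 M1 :: "'a::banach \<Rightarrow> 'a" and \<phi> :: "real \<Rightarrow> real" and x0 :: 'a
  assumes M0: "bounded_linear M0" and M1: "bounded_linear M1"
    and \<phi>: "continuous_on UNIV \<phi>" and \<phi>b: "\<And>z. \<bar>\<phi> z\<bar> \<le> 1"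
  shows "\<exists>X. X 0 = x0 \<and> (\<forall>z. (X has_vector_derivative (M0 (X z) + \<phi> z *\<^sub>R M1 (X z))) (at z))"
proof -
  define L where "L z x = M0 x + \<phi> z *\<^sub>R M1 x" for z x
  obtain K0 where K0: "\<And>x. norm (M0 x) \<le> norm x * K0" "K0 > 0"
    using bounded_linear.pos_bounded[OF M0] by blast
  obtain K1 where K1: "\<And>x. norm (M1 x) \<le> norm x * K1" "K1 > 0"
    using bounded_linear.pos_bounded[OF M1] by blast
  define K where "K = K0 + K1"
  have K: "K \<ge> 0" unfolding K_def using K0 K1 by simp
  have Lb: "norm (L z x) \<le> K * norm x" for z x
  proof -
    have "norm (L z x) \<le> norm (M0 x) + \<bar>\<phi> z\<bar> * norm (M1 x)"
      unfolding L_def by (metis norm_scaleR norm_triangle_ineq)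
    also have "\<dots> \<le> norm x * K0 + 1 * (norm x * K1)"
      by (intro add_mono mult_mono K0 K1 \<phi>b) auto
    finally show ?thesis unfolding K_def by (simp add: algebra_simps)
  qed
  have Llin: "bounded_linear (L z)" for z
    unfolding L_def by (intro bounded_linear_add M0 bounded_linear_compose[OF bounded_linear_scaleR_right M1])
  have Lc: "continuous_on UNIV (\<lambda>s. L s (Q s))" if "continuous_on UNIV Q" for Q
    unfolding L_def
    by (intro continuous_intros bounded_linear.continuous_on[OF M0] bounded_linear.continuous_on[OF M1] \<phi> that)
  define P where "P = rec_nat (\<lambda>z. x0) (\<lambda>n Q. Jint (\<lambda>s. L s (Q s)))"
  have P0: "P 0 = (\<lambda>z. x0)" and PS: "P (Suc n) = Jint (\<lambda>s. L s (P n s))" for n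
    unfolding P_def by simp_all
  define C where "C = norm x0"
  have C: "C \<ge> 0" unfolding C_def by simp
  have Pprop: "continuous_on UNIV (P n) \<and> (\<forall>z. norm (P n z) \<le> C * (K*\<bar>z\<bar>)^n / fact n)" for n
  proof (induction n)
    case 0
    then show ?case by (simp add: P0 C_def)
  next
    case (Suc n)
    have gc: "continuous_on UNIV (\<lambda>s. L s (P n s))" using Lc Suc by blast
    have d: "(P (Suc n) has_vector_derivative L z (P n z)) (at z)" for z
      unfolding PS by (rule Jint_deriv[OF gc])
    have "continuous_on UNIV (P (Suc n))"
      using d by (meson continuous_at_imp_continuous_on has_vector_derivative_continuous)
    moreover have "norm (P (Suc n) z) \<le> C * (K*\<bar>z\<bar>)^Suc n / fact (Suc n)" for z
      unfolding PS
    proof (rule Jint_bound[OF gc K C])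
      fix s
      have "norm (L s (P n s)) \<le> K * norm (P n s)" by (rule Lb)
      also have "\<dots> \<le> K * (C * (K*\<bar>s\<bar>)^n / fact n)"
        using Suc K by (intro mult_left_mono) auto
      finally show "norm (L s (P n s)) \<le> C * K * (K * \<bar>s\<bar>) ^ n / fact n" by (simp add: mult_ac)
    qed
    ultimately show ?case by blast
  qed
  have Pd: "(P (Suc n) has_vector_derivative L z (P n z)) (at z)" for n z
    unfolding PS by (rule Jint_deriv[OF Lc]) (use Pprop in blast)
  define X where "X z = (\<Sum>n. P n z)" for z
  have summ: "summable (\<lambda>n. P n z)" for z
    by (rule summable_comparison_test'[OF summ_bound[of C "K*\<bar>z\<bar>"]]) (use Pprop in auto)
  define D where "D n x = (case n of 0 \<Rightarrow> 0 | Suc m \<Rightarrow> L x (P m x))" for n x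
  have Dd: "(P n has_vector_derivative D n x) (at x)" for n x
    by (cases n) (auto simp: D_def P0 Pd)
  have Dsum: "(\<Sum>i<Suc m. D i x) = L x (\<Sum>i<m. P i x)" for m x
    unfolding sum.lessThan_Suc_shift by (simp add: D_def linear_sum[OF bounded_linear.linear[OF Llin]])
  have "(X has_vector_derivative L z (X z)) (at z)" for z
  proof -
    define N where "N = \<bar>z\<bar> + 1"
    define S where "S = {-N<..<N}"
    have zS: "z \<in> S" unfolding S_def N_def by auto
    have unif: "uniform_limit S (\<lambda>m x. \<Sum>i<m. P i x) (\<lambda>x. suminf (\<lambda>i. P i x)) sequentially"
    proof (rule Weierstrass_m_test)
      show "summable (\<lambda>n. C * (K*N)^n / fact n)" by (rule summ_bound)
      fix n x assume "x \<in> S"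
      then have "\<bar>x\<bar> \<le> N" unfolding S_def by auto
      then have "(K*\<bar>x\<bar>)^n \<le> (K*N)^n" using K by (intro power_mono mult_left_mono) auto
      then have "C * (K*\<bar>x\<bar>)^n / fact n \<le> C * (K*N)^n / fact n"
        using C by (intro divide_right_mono mult_left_mono) auto
      then show "norm (P n x) \<le> C * (K*N)^n / fact n" using Pprop[of n] by (meson order_trans)
    qed
    have "\<exists>g. \<forall>x\<in>S. (\<lambda>n. P n x) sums (g x) \<and> (g has_derivative (\<lambda>h. h *\<^sub>R L x (X x))) (at x within S)"
    proof (rule has_derivative_series[where f' = "\<lambda>n x h. h *\<^sub>R D n x"])
      show "convex S" unfolding S_def by simp
      show "z \<in> S" by (rule zS)
      show "(\<lambda>n. P n z) sums X z" unfolding X_def using summ by (simp add: summable_sums)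
      fix n x assume "x \<in> S"
      show "(P n has_derivative (\<lambda>h. h *\<^sub>R D n x)) (at x within S)"
        using Dd[of n x] by (simp add: has_vector_derivative_def has_derivative_at_withinI)
    next
      fix e :: real assume e: "e > 0"
      have e': "e / (K + 1) > 0" using e K by simp
      obtain N0 where N0: "\<And>m x. m \<ge> N0 \<Longrightarrow> x \<in> S \<Longrightarrow> dist (\<Sum>i<m. P i x) (X x) < e / (K+1)"
        using uniform_limitD[OF unif e'] unfolding eventually_sequentially X_def by blast
      show "\<forall>\<^sub>F n in sequentially. \<forall>x\<in>S. \<forall>h. norm ((\<Sum>i<n. h *\<^sub>R D i x) - h *\<^sub>R L x (X x)) \<le> e * norm h"
        unfolding eventually_sequentially
      proof (intro exI[of _ "Suc N0"] allI impI ballI)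
        fix n x h assume n: "Suc N0 \<le> n" and x: "x \<in> S"
        obtain m where m: "n = Suc m" "m \<ge> N0" using n by (cases n) auto
        have "(\<Sum>i<n. h *\<^sub>R D i x) - h *\<^sub>R L x (X x) = h *\<^sub>R L x ((\<Sum>i<m. P i x) - X x)"
          using m Dsum[where m=m and x=x] by (simp add: scaleR_sum_right[symmetric] linear_diff[OF bounded_linear.linear[OF Llin]] scaleR_diff_right)
        also have "norm \<dots> \<le> \<bar>h\<bar> * (K * norm ((\<Sum>i<m. P i x) - X x))"
          by (simp add: Lb mult_left_mono)
        also have "\<dots> \<le> \<bar>h\<bar> * (K * (e / (K+1)))"
          using N0[OF m(2) x] K by (intro mult_left_mono) (auto simp: dist_norm)
        also have "\<dots> \<le> e * norm h"
          using K e by (simp add: field_simps)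
        finally show "norm ((\<Sum>i<n. h *\<^sub>R D i x) - h *\<^sub>R L x (X x)) \<le> e * norm h" .
      qed
    qed
    then obtain g where g: "\<And>x. x \<in> S \<Longrightarrow> (\<lambda>n. P n x) sums (g x) \<and> (g has_derivative (\<lambda>h. h *\<^sub>R L x (X x))) (at x within S)"
      by blast
    have gX: "g x = X x" if "x \<in> S" for x
      using g[OF that] summ[of x] unfolding X_def by (simp add: sums_iff)
    have "open S" unfolding S_def by simp
    have aw: "at z within S = at z" by (rule at_within_open[OF zS \<open>open S\<close>])
    have "(g has_derivative (\<lambda>h. h *\<^sub>R L z (X z))) (at z)"
      using conjunct2[OF g[OF zS]] unfolding aw .
    then have "(X has_derivative (\<lambda>h. h *\<^sub>R L z (X z))) (at z)"
      by (rule has_derivative_transform_within_open[OF _ \<open>open S\<close> zS]) (use gX in auto)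
    then show ?thesis by (simp add: has_vector_derivative_def)
  qed
  moreover have "X 0 = x0"
  proof -
    have "P (Suc n) 0 = 0" for n unfolding PS Jint_def by simp
    then have "(\<lambda>n. P n 0) sums x0"
      using sums_single[of 0 "\<lambda>_. x0"] 
      by (subst sums_cong[where g="\<lambda>n. if n = 0 then x0 else 0"]) (auto simp: P0 gr0_conv_Suc)
    then show ?thesis unfolding X_def by (simp add: sums_iff)
  qed
  ultimately show ?thesis unfolding L_def by blast
qed



lemma growth_upper:
  fixes N N' :: "real \<Rightarrow> real"
  assumes ab: "a \<le> b" and d: "\<And>z. a \<le> z \<Longrightarrow> z \<le> b \<Longrightarrow> (N has_real_derivative N' z) (at z)"
    and le: "\<And>z. a \<le> z \<Longrightarrow> z \<le> b \<Longrightarrow> N' z \<le> k * N z"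
  shows "N b \<le> N a * exp (k * (b - a))"
proof -
  define Q where "Q z = N z * exp (- k * z)" for z
  have "Q b \<le> Q a"
  proof (rule DERIV_nonpos_imp_nonincreasing[OF ab])
    fix z assume z: "a \<le> z" "z \<le> b"
    have "(Q has_real_derivative (N' z * exp (- k * z) + N z * (exp (- k * z) * (- k)))) (at z)"
      unfolding Q_def by (auto intro!: derivative_eq_intros d z)
    moreover have "N' z * exp (- k * z) + N z * (exp (- k * z) * (- k)) = (N' z - k * N z) * exp (- k * z)"
      by (simp add: algebra_simps)
    moreover have "(N' z - k * N z) * exp (- k * z) \<le> 0"
      using le[OF z] by (simp add: mult_nonpos_nonneg)
    ultimately show "\<exists>y. (Q has_real_derivative y) (at z) \<and> y \<le> 0" by auto
  qed
  then have "N b * exp (- k * b) * exp (k * b) \<le> N a * exp (- k * a) * exp (k * b)"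
    unfolding Q_def by (intro mult_right_mono) auto
  then show ?thesis by (simp add: mult.assoc exp_add[symmetric] algebra_simps)
qed

lemma growth_lower:
  fixes N N' :: "real \<Rightarrow> real"
  assumes ab: "a \<le> b" and d: "\<And>z. a \<le> z \<Longrightarrow> z \<le> b \<Longrightarrow> (N has_real_derivative N' z) (at z)"
    and le: "\<And>z. a \<le> z \<Longrightarrow> z \<le> b \<Longrightarrow> N' z \<ge> k * N z"
  shows "N b \<ge> N a * exp (k * (b - a))"
proof -
  have "- N b \<le> - N a * exp (k * (b - a))"
    by (rule growth_upper[OF ab, of "\<lambda>z. - N z" "\<lambda>z. - N' z"])
       (auto intro!: derivative_eq_intros d simp: le)
  then show ?thesis by simp
qed

lemma inner_sq_deriv:
  fixes X :: "real \<Rightarrow> 'a::real_inner"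
  assumes "(X has_vector_derivative V) (at z)"
  shows "((\<lambda>z. X z \<bullet> X z) has_real_derivative 2 * (X z \<bullet> V)) (at z)"
proof -
  have d: "(X has_derivative (\<lambda>h. h *\<^sub>R V)) (at z)"
    using assms by (simp add: has_vector_derivative_def)
  have "((\<lambda>z. X z \<bullet> X z) has_derivative (*) (2 * (X z \<bullet> V))) (at z)"
    by (rule has_derivative_eq_rhs[OF has_derivative_inner[OF d d]])
       (auto simp: fun_eq_iff inner_commute algebra_simps)
  then show ?thesis by (simp add: has_field_derivative_def)
qed

lemma lin_ode_unique:
  fixes X :: "real \<Rightarrow> 'a::real_inner" and L :: "real \<Rightarrow> 'a \<Rightarrow> 'a"
  assumes d: "\<And>z. (X has_vector_derivative L z (X z)) (at z)"
    and Lb: "\<And>z x. norm (L z x) \<le> K * norm x" and X0: "X 0 = 0"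
  shows "X z = 0"
proof -
  define N where "N z = X z \<bullet> X z" for z
  have Nd: "(N has_real_derivative 2 * (X z \<bullet> L z (X z))) (at z)" for z
    unfolding N_def by (rule inner_sq_deriv[OF d])
  have bnd: "\<bar>2 * (X z \<bullet> L z (X z))\<bar> \<le> 2 * K * N z" for z
  proof -
    have "\<bar>X z \<bullet> L z (X z)\<bar> \<le> norm (X z) * norm (L z (X z))" by (rule Cauchy_Schwarz_ineq2)
    also have "\<dots> \<le> norm (X z) * (K * norm (X z))" by (intro mult_left_mono Lb) auto
    also have "\<dots> = K * N z" unfolding N_def by (simp add: power2_norm_eq_inner[symmetric] power2_eq_square)
    finally show ?thesis by simp
  qed
  have b1: "2 * (X z \<bullet> L z (X z)) \<le> 2 * K * N z" and b2: "2 * (X z \<bullet> L z (X z)) \<ge> (- 2 * K) * N z" for z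
    using bnd[of z] by (auto simp: abs_le_iff)
  have N0: "N 0 = 0" unfolding N_def X0 by simp
  have Nnn: "N z \<ge> 0" for z unfolding N_def by simp
  have "N z \<le> 0"
  proof (cases "z \<ge> 0")
    case True
    have "N z \<le> N 0 * exp (2 * K * (z - 0))"
      by (rule growth_upper[OF True Nd]) (use b1 in auto)
    then show ?thesis using N0 by simp
  next
    case False
    have "N 0 \<ge> N z * exp ((- 2 * K) * (0 - z))"
      by (rule growth_lower[of z 0 N, OF _ Nd]) (use False b2 in auto)
    then have "N z * exp ((- 2 * K) * (0 - z)) \<le> 0" using N0 by simp
    then show ?thesis by (simp add: mult_le_0_iff)
  qed
  then have "N z = 0" using Nnn[of z] by simp
  then show ?thesis unfolding N_def by simp
qed



definition CM0 :: "real \<Rightarrow> complex \<Rightarrow> complex^2^2" where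
  "CM0 c lam = (\<chi> i j. if i = 1 then (if j = 1 then 0 else 1)
     else (if j = 1 then - of_real (gam c) * lam\<^sup>2 else 2 * of_real c * of_real (gam c) * lam))"

definition CM1 :: "real \<Rightarrow> complex^2^2" where
  "CM1 c = (\<chi> i j. if i = 1 then 0 else (if j = 1 then - of_real (gam c) else 0))"

lemma mm_blin: "bounded_linear (\<lambda>H::complex^2^2. C ** H)"
proof -
  have "linear (\<lambda>H::complex^2^2. C ** H)"
  proof (rule linearI)
    fix x y :: "complex^2^2" show "C ** (x + y) = C ** x + C ** y" by (rule matrix_add_ldistrib)
  next
    fix r :: real and x :: "complex^2^2"
    show "C ** (r *\<^sub>R x) = r *\<^sub>R (C ** x)"
      apply (simp add: vec_eq_iff matrix_matrix_mult_def sum_2)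
      apply (simp add: scaleR_conv_of_real algebra_simps)
      done
  qed
  then show ?thesis by (simp add: linear_conv_bounded_linear)
qed

lemma coeff_split:
  "coeff_matrix c f lam z ** H = CM0 c lam ** H + cos (f z) *\<^sub>R (CM1 c ** H)"
  apply (simp add: vec_eq_iff matrix_matrix_mult_def sum_2 forall_2 coeff_matrix_def CM0_def CM1_def)
  apply (simp add: scaleR_conv_of_real algebra_simps)
  done

lemma tw_cont: "traveling_wave c f \<Longrightarrow> continuous_on UNIV f"
  unfolding traveling_wave_def
  by (meson DERIV_isCont continuous_at_imp_continuous_on)

lemma fund_exists:
  assumes "traveling_wave c f"
  shows "\<exists>F. is_fundamental_matrix c f lam F"
proof -
  have "\<exists>X. X 0 = (mat 1 :: complex^2^2) \<and> (\<forall>z. (X has_vector_derivative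
      (CM0 c lam ** X z + cos (f z) *\<^sub>R (CM1 c ** X z))) (at z))"
    by (rule lin_ode_exists[OF mm_blin mm_blin])
       (auto intro!: continuous_intros tw_cont[OF assms])
  then show ?thesis unfolding is_fundamental_matrix_def coeff_split by blast
qed

lemma coeff_bound: "\<exists>K. \<forall>z (H::complex^2^2). norm (coeff_matrix c f lam z ** H) \<le> K * norm H"
proof -
  obtain K0 where K0: "\<And>x::complex^2^2. norm (CM0 c lam ** x) \<le> norm x * K0"
    using bounded_linear.bounded[OF mm_blin[of "CM0 c lam"]] by blast
  obtain K1 where K1: "\<And>x::complex^2^2. norm (CM1 c ** x) \<le> norm x * K1" "K1 \<ge> 0"
    using bounded_linear.nonneg_bounded[OF mm_blin[of "CM1 c"]] by blast
  have "norm (coeff_matrix c f lam z ** H) \<le> (K0 + K1) * norm H" for z and H :: "complex^2^2"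
  proof -
    have "norm (coeff_matrix c f lam z ** H) \<le> norm (CM0 c lam ** H) + \<bar>cos (f z)\<bar> * norm (CM1 c ** H)"
      unfolding coeff_split by (metis norm_scaleR norm_triangle_ineq)
    also have "\<dots> \<le> norm H * K0 + 1 * (norm H * K1)"
      by (intro add_mono mult_mono K0 K1) auto
    finally show ?thesis by (simp add: algebra_simps)
  qed
  then show ?thesis by blast
qed

lemma fund_unique:
  assumes F: "is_fundamental_matrix c f lam F" and G: "is_fundamental_matrix c f lam G"
  shows "F = G"
proof
  fix z
  obtain K where K: "\<And>z (H::complex^2^2). norm (coeff_matrix c f lam z ** H) \<le> K * norm H"
    using coeff_bound by blast
  have "F z - G z = 0"
  proof (rule lin_ode_unique[where X="\<lambda>z. F z - G z" and L = "\<lambda>z H. coeff_matrix c f lam z ** H", OF _ K])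
    fix z
    show "((\<lambda>z. F z - G z) has_vector_derivative coeff_matrix c f lam z ** (F z - G z)) (at z)"
      using F G unfolding is_fundamental_matrix_def
      by (auto intro!: derivative_eq_intros simp: matrix_add_ldistrib[symmetric] matrix_vector_mult_diff_distrib
            algebra_simps)
  next
    show "F 0 - G 0 = 0" using F G unfolding is_fundamental_matrix_def by simp
  qed
  then show "F z = G z" by simp
qed

lemma monodromy_eq:
  assumes F: "is_fundamental_matrix c f lam F"
  shows "monodromy c f T lam = F T"
  unfolding monodromy_def
proof (rule the_equality)
  show "\<exists>G. is_fundamental_matrix c f lam G \<and> G T = F T" using F by blast
  fix M assume "\<exists>G. is_fundamental_matrix c f lam G \<and> G T = M"
  then show "M = F T" using fund_unique[OF F] by blast
qed



lemma inner_cmult_self: "(x::complex) \<bullet> (c * x) = Re c * (x \<bullet> x)"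
  by (simp add: inner_complex_def algebra_simps)

lemma inner_cross: "\<bar>(x::complex) \<bullet> (g * y)\<bar> \<le> \<epsilon> * (norm x * norm y)" if "cmod g \<le> \<epsilon>"
proof -
  have "\<bar>x \<bullet> (g * y)\<bar> \<le> norm x * norm (g * y)" by (rule Cauchy_Schwarz_ineq2)
  also have "\<dots> = cmod g * (norm x * norm y)" by (simp add: norm_mult)
  also have "\<dots> \<le> \<epsilon> * (norm x * norm y)" by (intro mult_right_mono that) auto
  finally show ?thesis .
qed

lemma re_bound: "\<bar>Re g\<bar> \<le> \<epsilon>" if "cmod g \<le> \<epsilon>"
  using abs_Re_le_cmod[of g] that by linarith

lemma sq_exp_bounds:
  fixes r x y T :: real
  assumes r: "r \<ge> 0" and l: "exp (2 * x * T) \<le> r^2" and h: "r^2 \<le> exp (2 * y * T)"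
  shows "exp (x * T) \<le> r \<and> r \<le> exp (y * T)"
proof -
  have s: "exp (2 * a * T) = (exp (a * T))^2" for a
    by (simp add: power2_eq_square exp_add[symmetric] algebra_simps)
  show ?thesis using l h r unfolding s by (auto intro: power2_le_imp_le)
qed

lemma cone_lemma:
  fixes u v g :: "real \<Rightarrow> complex" and m1 m2 \<rho> :: complex
  assumes du: "\<And>z. (u has_vector_derivative ((m1 - g z) * u z + g z * v z)) (at z)"
    and dv: "\<And>z. (v has_vector_derivative ((m2 + g z) * v z - g z * u z)) (at z)"
    and gb: "\<And>z. cmod (g z) \<le> \<epsilon>"
    and gap: "Re m1 - Re m2 > 4 * \<epsilon>"
    and T: "T > 0" and uT: "u T = \<rho> * u 0" and vT: "v T = \<rho> * v 0"
    and nz: "u 0 \<noteq> 0 \<or> v 0 \<noteq> 0" and rnz: "\<rho> \<noteq> 0"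
  shows "(exp ((Re m1 - 2*\<epsilon>) * T) \<le> cmod \<rho> \<and> cmod \<rho> \<le> exp ((Re m1 + 2*\<epsilon>) * T)) \<or>
         (exp ((Re m2 - 2*\<epsilon>) * T) \<le> cmod \<rho> \<and> cmod \<rho> \<le> exp ((Re m2 + 2*\<epsilon>) * T))"
proof -
  have e0: "\<epsilon> \<ge> 0" using gb[of 0] norm_ge_zero[of "g 0"] by linarith
  define U where "U z = u z \<bullet> u z" for z
  define V where "V z = v z \<bullet> v z" for z
  define U' where "U' z = 2 * (u z \<bullet> ((m1 - g z) * u z + g z * v z))" for z
  define V' where "V' z = 2 * (v z \<bullet> ((m2 + g z) * v z - g z * u z))" for z
  have Ud: "(U has_real_derivative U' z) (at z)" for z
    unfolding U_def U'_def by (rule inner_sq_deriv[OF du])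
  have Vd: "(V has_real_derivative V' z) (at z)" for z
    unfolding V_def V'_def by (rule inner_sq_deriv[OF dv])
  have Ueq: "U z = (norm (u z))^2" and Veq: "V z = (norm (v z))^2" for z
    unfolding U_def V_def by (simp_all add: power2_norm_eq_inner)
  have U'eq: "U' z = 2 * (Re (m1 - g z) * U z + u z \<bullet> (g z * v z))" for z
    unfolding U'_def U_def by (simp add: inner_add_right inner_cmult_self)
  have V'eq: "V' z = 2 * (Re (m2 + g z) * V z - v z \<bullet> (g z * u z))" for z
    unfolding V'_def V_def by (simp add: inner_diff_right inner_cmult_self)
  have cu: "\<bar>u z \<bullet> (g z * v z)\<bar> \<le> \<epsilon> * (norm (u z) * norm (v z))" for z
    by (rule inner_cross[OF gb])
  have cv: "\<bar>v z \<bullet> (g z * u z)\<bar> \<le> \<epsilon> * (norm (u z) * norm (v z))" for z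
    using inner_cross[OF gb, of "v z" z "u z"] by (metis mult.commute)
  have r1: "Re (m1 - g z) \<ge> Re m1 - \<epsilon>" "Re (m1 - g z) \<le> Re m1 + \<epsilon>"
    and r2: "Re (m2 + g z) \<ge> Re m2 - \<epsilon>" "Re (m2 + g z) \<le> Re m2 + \<epsilon>" for z
    using re_bound[OF gb[of z]] by (simp_all add: abs_le_iff)
  have amgm: "2 * (norm (u z) * norm (v z)) \<le> U z + V z" for z
    unfolding Ueq Veq using sum_squares_bound[of "norm (u z)" "norm (v z)"] by (simp add: mult.assoc)
  define \<beta> where "\<beta> = 2 * (Re m2 + 2 * \<epsilon>)"
  have Wd: "((\<lambda>z. V z - U z) has_real_derivative V' z - U' z) (at z)" for z
    by (intro derivative_intros Vd Ud)
  have Wle: "V' z - U' z \<le> \<beta> * (V z - U z)" for z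
  proof -
    have U0: "U z \<ge> 0" "V z \<ge> 0" unfolding U_def V_def by auto
    define P where "P = u z \<bullet> (g z * v z)"
    define Q where "Q = v z \<bullet> (g z * u z)"
    define nn where "nn = norm (u z) * norm (v z)"
    define A where "A = Re (m1 - g z)"
    define B where "B = Re (m2 + g z)"
    have eq: "V' z - U' z = 2 * (B * V z) - 2 * Q - 2 * (A * U z) - 2 * P"
      unfolding U'eq V'eq P_def Q_def A_def B_def by (simp add: algebra_simps)
    have a: "A * U z \<ge> Re m1 * U z - \<epsilon> * U z" using r1(1)[of z] U0 unfolding A_def
      by (metis left_diff_distrib mult_right_mono)
    have b: "B * V z \<le> Re m2 * V z + \<epsilon> * V z" using r2(2)[of z] U0 unfolding B_def
      by (metis distrib_right mult_right_mono)
    have P: "P \<ge> - (\<epsilon> * nn)" and Q: "Q \<ge> - (\<epsilon> * nn)"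
      using cu[of z] cv[of z] unfolding P_def Q_def nn_def by (simp_all add: abs_le_iff)
    have am: "2 * (\<epsilon> * nn) \<le> \<epsilon> * U z + \<epsilon> * V z" using mult_left_mono[OF amgm[of z] e0] unfolding nn_def
      by (simp add: algebra_simps)
    have g: "Re m1 * U z - Re m2 * U z - 4 * (\<epsilon> * U z) \<ge> 0" using mult_right_mono[OF less_imp_le[OF gap] U0(1)]
      by (simp add: algebra_simps)
    have e5: "\<beta> * (V z - U z) = 2 * (Re m2 * V z) + 4 * (\<epsilon> * V z) - 2 * (Re m2 * U z) - 4 * (\<epsilon> * U z)"
      unfolding \<beta>_def by (simp add: algebra_simps)
    show ?thesis unfolding eq e5 using a b P Q am g by linarith
  qed
  have rho2: "U T = (cmod \<rho>)^2 * U 0" "V T = (cmod \<rho>)^2 * V 0"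
    unfolding Ueq uT vT Veq by (simp_all add: norm_mult power_mult_distrib)
  have Upos: "U 0 > 0 \<or> V 0 > 0" using nz unfolding Ueq Veq by auto
  show ?thesis
  proof (cases "V 0 \<le> U 0")
    case True
    have cone: "V z \<le> U z" if "0 \<le> z" for z
    proof -
      have "V z - U z \<le> (V 0 - U 0) * exp (\<beta> * (z - 0))"
        by (rule growth_upper[OF that Wd Wle])
      also have "\<dots> \<le> 0" using True by (simp add: mult_nonpos_nonneg)
      finally show ?thesis by simp
    qed
    have U0: "U 0 > 0" using Upos True by linarith
    have lo: "U' z \<ge> 2 * (Re m1 - 2*\<epsilon>) * U z" and hi: "U' z \<le> 2 * (Re m1 + 2*\<epsilon>) * U z" if "0 \<le> z" for z
    proof -
      have uv: "norm (v z) \<le> norm (u z)" using cone[OF that] unfolding Ueq Veq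
        by (meson norm_ge_zero power2_le_imp_le)
      have uvU: "norm (u z) * norm (v z) \<le> U z" unfolding Ueq power2_eq_square
        using uv by (intro mult_left_mono) auto
      have Un: "U z \<ge> 0" unfolding U_def by auto
      define P where "P = u z \<bullet> (g z * v z)"
      define A where "A = Re (m1 - g z)"
      have eq: "U' z = 2 * (A * U z) + 2 * P" unfolding U'eq A_def P_def by simp
      have a: "A * U z \<ge> Re m1 * U z - \<epsilon> * U z" using r1(1)[of z] Un unfolding A_def
        by (metis left_diff_distrib mult_right_mono)
      have b: "A * U z \<le> Re m1 * U z + \<epsilon> * U z" using r1(2)[of z] Un unfolding A_def
        by (metis distrib_right mult_right_mono)
      have P: "\<bar>P\<bar> \<le> \<epsilon> * U z" using cu[of z] mult_left_mono[OF uvU e0] unfolding P_def by linarith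
      have e1: "2 * (Re m1 - 2*\<epsilon>) * U z = 2 * (Re m1 * U z) - 4 * (\<epsilon> * U z)"
        and e2: "2 * (Re m1 + 2*\<epsilon>) * U z = 2 * (Re m1 * U z) + 4 * (\<epsilon> * U z)"
        by (simp_all add: algebra_simps)
      show "U' z \<ge> 2 * (Re m1 - 2*\<epsilon>) * U z" unfolding eq e1 using a P by (simp add: abs_le_iff)
      show "U' z \<le> 2 * (Re m1 + 2*\<epsilon>) * U z" unfolding eq e2 using b P by (simp add: abs_le_iff)
    qed
    have "U T \<ge> U 0 * exp (2 * (Re m1 - 2*\<epsilon>) * (T - 0))"
      by (rule growth_lower[of 0 T U U', OF _ Ud lo]) (use T in auto)
    moreover have "U T \<le> U 0 * exp (2 * (Re m1 + 2*\<epsilon>) * (T - 0))"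
      by (rule growth_upper[of 0 T U U', OF _ Ud hi]) (use T in auto)
    ultimately have "exp (2 * (Re m1 - 2*\<epsilon>) * T) \<le> (cmod \<rho>)^2"
        "(cmod \<rho>)^2 \<le> exp (2 * (Re m1 + 2*\<epsilon>) * T)"
      using U0 rho2 by (simp_all add: mult.commute)
    then have "exp ((Re m1 - 2*\<epsilon>) * T) \<le> cmod \<rho> \<and> cmod \<rho> \<le> exp ((Re m1 + 2*\<epsilon>) * T)"
      by (intro sq_exp_bounds) auto
    then show ?thesis by blast
  next
    case False
    have cone: "U z < V z" if "z \<le> T" for z
    proof -
      have WT: "V T - U T > 0" using False rho2 rnz by simp
      have "V T - U T \<le> (V z - U z) * exp (\<beta> * (T - z))"
        by (rule growth_upper[OF that Wd Wle])
      then have "(V z - U z) * exp (\<beta> * (T - z)) > 0" using WT by linarith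
      then show ?thesis by (simp add: zero_less_mult_iff)
    qed
    have V0: "V 0 > 0" using Upos False by linarith
    have lo: "V' z \<ge> 2 * (Re m2 - 2*\<epsilon>) * V z" and hi: "V' z \<le> 2 * (Re m2 + 2*\<epsilon>) * V z" if "z \<le> T" for z
    proof -
      have uv: "norm (u z) \<le> norm (v z)" using cone[OF that] unfolding Ueq Veq
        by (meson less_imp_le norm_ge_zero power2_le_imp_le)
      have uvV: "norm (u z) * norm (v z) \<le> V z" unfolding Veq power2_eq_square
        using uv by (intro mult_right_mono) auto
      have Vn: "V z \<ge> 0" unfolding V_def by auto
      define Q where "Q = v z \<bullet> (g z * u z)"
      define B where "B = Re (m2 + g z)"
      have eq: "V' z = 2 * (B * V z) - 2 * Q" unfolding V'eq B_def Q_def by simp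
      have a: "B * V z \<ge> Re m2 * V z - \<epsilon> * V z" using r2(1)[of z] Vn unfolding B_def
        by (metis left_diff_distrib mult_right_mono)
      have b: "B * V z \<le> Re m2 * V z + \<epsilon> * V z" using r2(2)[of z] Vn unfolding B_def
        by (metis distrib_right mult_right_mono)
      have Q: "\<bar>Q\<bar> \<le> \<epsilon> * V z" using cv[of z] mult_left_mono[OF uvV e0] unfolding Q_def by linarith
      have e1: "2 * (Re m2 - 2*\<epsilon>) * V z = 2 * (Re m2 * V z) - 4 * (\<epsilon> * V z)"
        and e2: "2 * (Re m2 + 2*\<epsilon>) * V z = 2 * (Re m2 * V z) + 4 * (\<epsilon> * V z)"
        by (simp_all add: algebra_simps)
      show "V' z \<ge> 2 * (Re m2 - 2*\<epsilon>) * V z" unfolding eq e1 using a Q by (simp add: abs_le_iff)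
      show "V' z \<le> 2 * (Re m2 + 2*\<epsilon>) * V z" unfolding eq e2 using b Q by (simp add: abs_le_iff)
    qed
    have "V T \<ge> V 0 * exp (2 * (Re m2 - 2*\<epsilon>) * (T - 0))"
      by (rule growth_lower[of 0 T V V', OF _ Vd lo]) (use T in auto)
    moreover have "V T \<le> V 0 * exp (2 * (Re m2 + 2*\<epsilon>) * (T - 0))"
      by (rule growth_upper[of 0 T V V', OF _ Vd hi]) (use T in auto)
    ultimately have "exp (2 * (Re m2 - 2*\<epsilon>) * T) \<le> (cmod \<rho>)^2"
        "(cmod \<rho>)^2 \<le> exp (2 * (Re m2 + 2*\<epsilon>) * T)"
      using V0 rho2 by (simp_all add: mult.commute)
    then have "exp ((Re m2 - 2*\<epsilon>) * T) \<le> cmod \<rho> \<and> cmod \<rho> \<le> exp ((Re m2 + 2*\<epsilon>) * T)"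
      by (intro sq_exp_bounds) auto
    then show ?thesis by blast
  qed
qed



lemma comp_deriv:
  fixes F :: "real \<Rightarrow> complex^2^2"
  assumes "(F has_vector_derivative V) (at z)"
  shows "((\<lambda>z. F z $ i $ j) has_vector_derivative V $ i $ j) (at z)"
proof -
  have bl: "bounded_linear (\<lambda>M::complex^2^2. M $ i $ j)"
    using bounded_linear_compose[OF bounded_linear_vec_nth[of j] bounded_linear_vec_nth[of i]] by simp
  show ?thesis using bounded_linear.has_vector_derivative[OF bl assms] by simp
qed

definition A21 :: "real \<Rightarrow> (real \<Rightarrow> real) \<Rightarrow> complex \<Rightarrow> real \<Rightarrow> complex" where
  "A21 c f lam z = - of_real (gam c) * (lam\<^sup>2 + of_real (cos (f z)))"
definition A22 :: "real \<Rightarrow> complex \<Rightarrow> complex" where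
  "A22 c lam = 2 * of_real c * of_real (gam c) * lam"

lemma fund_comp:
  assumes F: "is_fundamental_matrix c f lam F"
  shows "((\<lambda>z. F z $ 1 $ j) has_vector_derivative F z $ 2 $ j) (at z)"
    "((\<lambda>z. F z $ 2 $ j) has_vector_derivative A21 c f lam z * F z $ 1 $ j + A22 c lam * F z $ 2 $ j) (at z)"
proof -
  have d: "(F has_vector_derivative coeff_matrix c f lam z ** F z) (at z)"
    using F unfolding is_fundamental_matrix_def by blast
  show "((\<lambda>z. F z $ 1 $ j) has_vector_derivative F z $ 2 $ j) (at z)"
    using comp_deriv[OF d, of 1 j] by (simp add: matrix_matrix_mult_def sum_2 coeff_matrix_def)
  show "((\<lambda>z. F z $ 2 $ j) has_vector_derivative A21 c f lam z * F z $ 1 $ j + A22 c lam * F z $ 2 $ j) (at z)"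
    using comp_deriv[OF d, of 2 j] by (simp add: matrix_matrix_mult_def sum_2 coeff_matrix_def A21_def A22_def)
qed

lemma det_abs:
  assumes F: "is_fundamental_matrix c f lam F" and T: "T \<ge> 0"
  shows "cmod (det (F T)) = exp (Re (A22 c lam) * T)"
proof -
  define D where "D z = F z $ 1 $ 1 * F z $ 2 $ 2 - F z $ 1 $ 2 * F z $ 2 $ 1" for z
  have Ddet: "det (F z) = D z" for z unfolding D_def by (simp add: det_2)
  have Dd: "(D has_vector_derivative A22 c lam * D z) (at z)" for z
  proof -
    have "(D has_vector_derivative
       (F z $ 1 $ 1 * (A21 c f lam z * F z $ 1 $ 2 + A22 c lam * F z $ 2 $ 2) + F z $ 2 $ 1 * F z $ 2 $ 2)
     - (F z $ 1 $ 2 * (A21 c f lam z * F z $ 1 $ 1 + A22 c lam * F z $ 2 $ 1) + F z $ 2 $ 2 * F z $ 2 $ 1)) (at z)"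
      unfolding D_def by (intro derivative_intros fund_comp[OF F])
    moreover have "(F z $ 1 $ 1 * (A21 c f lam z * F z $ 1 $ 2 + A22 c lam * F z $ 2 $ 2) + F z $ 2 $ 1 * F z $ 2 $ 2)
     - (F z $ 1 $ 2 * (A21 c f lam z * F z $ 1 $ 1 + A22 c lam * F z $ 2 $ 1) + F z $ 2 $ 2 * F z $ 2 $ 1)
      = A22 c lam * D z" unfolding D_def by (simp add: algebra_simps)
    ultimately show ?thesis by simp
  qed
  define N where "N z = D z \<bullet> D z" for z
  have Nd: "(N has_real_derivative 2 * (Re (A22 c lam) * N z)) (at z)" for z
    unfolding N_def using inner_sq_deriv[OF Dd, of z] by (simp add: inner_cmult_self)
  have N0: "N 0 = 1" unfolding N_def D_def using F unfolding is_fundamental_matrix_def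
    by (simp add: mat_def)
  have "N T \<le> N 0 * exp ((2 * Re (A22 c lam)) * (T - 0))"
    by (rule growth_upper[OF T Nd]) simp
  moreover have "N T \<ge> N 0 * exp ((2 * Re (A22 c lam)) * (T - 0))"
    by (rule growth_lower[OF T Nd]) simp
  ultimately have "N T = exp (2 * Re (A22 c lam) * T)" using N0 by simp
  then have "(cmod (D T))^2 = (exp (Re (A22 c lam) * T))^2"
    unfolding N_def by (simp add: power2_norm_eq_inner[symmetric] power2_eq_square exp_add[symmetric] algebra_simps)
  then have "cmod (D T) = exp (Re (A22 c lam) * T)"
    by (simp add: power2_eq_iff_nonneg)
  then show ?thesis by (simp add: Ddet)
qed



definition mu1 :: "real \<Rightarrow> complex \<Rightarrow> complex" where "mu1 c lam = lam / of_real (c - 1)"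
definition mu2 :: "real \<Rightarrow> complex \<Rightarrow> complex" where "mu2 c lam = lam / of_real (c + 1)"

lemma alg_poly_u:
  fixes a l p q co ia ib il :: complex
  assumes "a * ia = 1" "(a + 2) * ib = 1" "l * il = 1"
  shows "(- (ia * ib) * (l\<^sup>2 + co)) * p + (2 * (a + 1) * (ia * ib) * l) * q - l * ib * q
     = (l * ia - co * il / 2) * (q - l * ib * p) + co * il / 2 * (q - l * ia * p)"
  using assms by algebra

lemma alg_poly_v:
  fixes a l p q co ia ib il :: complex
  assumes "a * ia = 1" "(a + 2) * ib = 1" "l * il = 1"
  shows "(- (ia * ib) * (l\<^sup>2 + co)) * p + (2 * (a + 1) * (ia * ib) * l) * q - l * ia * q
     = (l * ib + co * il / 2) * (q - l * ia * p) - co * il / 2 * (q - l * ib * p)"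
  using assms by algebra

lemma coef_forms:
  fixes c :: real
  assumes c: "c\<^sup>2 \<noteq> 1"
  defines "a \<equiv> complex_of_real (c - 1)"
  shows "a \<noteq> 0" "a + 2 \<noteq> 0" "complex_of_real (gam c) = (1/a) * (1/(a+2))"
    "complex_of_real c = a + 1" "mu1 c lam = lam * (1/a)" "mu2 c lam = lam * (1/(a+2))"
proof -
  have r: "c - 1 \<noteq> 0" "c + 1 \<noteq> 0" using c by (auto simp: power2_eq_square)
      (metis add.inverse_inverse add_eq_0_iff mult_minus_left mult_1 c)
  have e: "a + 2 = complex_of_real (c + 1)" unfolding a_def by simp
  show "a \<noteq> 0" unfolding a_def using r by (metis of_real_eq_0_iff)
  show "a + 2 \<noteq> 0" unfolding e using r by (metis of_real_eq_0_iff)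
  have "c\<^sup>2 - 1 = (c - 1) * (c + 1)" by (simp add: power2_eq_square algebra_simps)
  then show "complex_of_real (gam c) = (1/a) * (1/(a+2))" unfolding gam_def e a_def
    by (simp add: of_real_divide)
  show "complex_of_real c = a + 1" unfolding a_def by simp
  show "mu1 c lam = lam * (1/a)" unfolding mu1_def a_def by simp
  show "mu2 c lam = lam * (1/(a+2))" unfolding mu2_def e by simp
qed

lemma uv_system:
  fixes x1 x2 :: complex
  assumes c: "c\<^sup>2 \<noteq> 1" and F: "is_fundamental_matrix c f lam F" and l: "lam \<noteq> 0"
  defines "p \<equiv> \<lambda>z. F z $ 1 $ 1 * x1 + F z $ 1 $ 2 * x2"
    and "q \<equiv> \<lambda>z. F z $ 2 $ 1 * x1 + F z $ 2 $ 2 * x2"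
  defines "u \<equiv> \<lambda>z. q z - mu2 c lam * p z" and "v \<equiv> \<lambda>z. q z - mu1 c lam * p z"
    and "g \<equiv> \<lambda>z. complex_of_real (cos (f z)) / (2 * lam)"
  shows "(u has_vector_derivative (mu1 c lam - g z) * u z + g z * v z) (at z)"
    "(v has_vector_derivative (mu2 c lam + g z) * v z - g z * u z) (at z)"
proof -
  have pd: "(p has_vector_derivative q z) (at z)"
    unfolding p_def q_def by (rule derivative_eq_intros fund_comp[OF F] refl)+ simp
  have qd: "(q has_vector_derivative A21 c f lam z * p z + A22 c lam * q z) (at z)"
    unfolding p_def q_def 
    by (rule derivative_eq_intros fund_comp[OF F] refl)+ (simp add: algebra_simps)
  define a where "a = complex_of_real (c - 1)"
  note cf = coef_forms[OF c, folded a_def]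
  have ia: "a * (1/a) = 1" and ib: "(a+2) * (1/(a+2)) = 1" and il: "lam * (1/lam) = 1"
    using cf l by auto
  have g: "g z = complex_of_real (cos (f z)) * (1/lam) / 2" unfolding g_def by simp
  have A: "A21 c f lam z = - ((1/a) * (1/(a+2))) * (lam\<^sup>2 + complex_of_real (cos (f z)))"
    "A22 c lam = 2 * (a + 1) * ((1/a) * (1/(a+2))) * lam"
    unfolding A21_def A22_def cf by simp_all
  have "(u has_vector_derivative (A21 c f lam z * p z + A22 c lam * q z) - mu2 c lam * q z) (at z)"
    unfolding u_def by (intro derivative_intros pd qd)
  moreover have "(A21 c f lam z * p z + A22 c lam * q z) - mu2 c lam * q z = (mu1 c lam - g z) * u z + g z * v z"
    unfolding u_def v_def g A cf using alg_poly_u[OF ia ib il, of "complex_of_real (cos (f z))" "p z" "q z"]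
    by simp
  ultimately show "(u has_vector_derivative (mu1 c lam - g z) * u z + g z * v z) (at z)" by simp
  have "(v has_vector_derivative (A21 c f lam z * p z + A22 c lam * q z) - mu1 c lam * q z) (at z)"
    unfolding v_def by (intro derivative_intros pd qd)
  moreover have "(A21 c f lam z * p z + A22 c lam * q z) - mu1 c lam * q z = (mu2 c lam + g z) * v z - g z * u z"
    unfolding u_def v_def g A cf using alg_poly_v[OF ia ib il, of "complex_of_real (cos (f z))" "p z" "q z"]
    by simp
  ultimately show "(v has_vector_derivative (mu2 c lam + g z) * v z - g z * u z) (at z)" by simp
qed

lemma kernel2:
  fixes m11 m12 m21 m22 r :: complex
  assumes "(r - m11) * (r - m22) - m12 * m21 = 0"
  obtains x1 x2 where "x1 \<noteq> 0 \<or> x2 \<noteq> 0" "m11 * x1 + m12 * x2 = r * x1" "m21 * x1 + m22 * x2 = r * x2"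
proof (cases "r - m11 \<noteq> 0 \<or> m12 \<noteq> 0")
  case True
  show ?thesis by (rule that[of m12 "r - m11"]) (use True assms in \<open>auto simp: algebra_simps\<close>)
next
  case False
  then have e: "r = m11" "m12 = 0" by auto
  show ?thesis
  proof (cases "m21 \<noteq> 0 \<or> r - m22 \<noteq> 0")
    case True
    show ?thesis by (rule that[of "r - m22" m21]) (use True e in \<open>auto simp: algebra_simps\<close>)
  next
    case False
    show ?thesis by (rule that[of 1 0]) (use False e in auto)
  qed
qed

lemma eig_bound:
  assumes c: "c\<^sup>2 \<noteq> 1" and F: "is_fundamental_matrix c f lam F" and T: "T > 0" and l: "lam \<noteq> 0"
    and gapc: "4 * (1 / (2 * cmod lam)) < \<bar>Re (mu1 c lam) - Re (mu2 c lam)\<bar>"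
    and det0: "det (mat r - F T) = 0" and rnz: "r \<noteq> 0"
  shows "(exp ((Re (mu1 c lam) - 2 * (1 / (2 * cmod lam))) * T) \<le> cmod r \<and>
            cmod r \<le> exp ((Re (mu1 c lam) + 2 * (1 / (2 * cmod lam))) * T)) \<or>
         (exp ((Re (mu2 c lam) - 2 * (1 / (2 * cmod lam))) * T) \<le> cmod r \<and>
            cmod r \<le> exp ((Re (mu2 c lam) + 2 * (1 / (2 * cmod lam))) * T))"
proof -
  define \<epsilon> where "\<epsilon> = 1 / (2 * cmod lam)"
  define M where "M = F T"
  have "(r - M $ 1 $ 1) * (r - M $ 2 $ 2) - M $ 1 $ 2 * M $ 2 $ 1 = 0"
    using det0 unfolding M_def by (simp add: det_2 mat_def)
  then obtain x1 x2 where x: "x1 \<noteq> 0 \<or> x2 \<noteq> 0" "M $ 1 $ 1 * x1 + M $ 1 $ 2 * x2 = r * x1"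
      "M $ 2 $ 1 * x1 + M $ 2 $ 2 * x2 = r * x2"
    by (rule kernel2)
  define p where "p \<equiv> \<lambda>z. F z $ 1 $ 1 * x1 + F z $ 1 $ 2 * x2"
  define q where "q \<equiv> \<lambda>z. F z $ 2 $ 1 * x1 + F z $ 2 $ 2 * x2"
  define u where "u \<equiv> \<lambda>z. q z - mu2 c lam * p z"
  define v where "v \<equiv> \<lambda>z. q z - mu1 c lam * p z"
  define g where "g \<equiv> \<lambda>z. complex_of_real (cos (f z)) / (2 * lam)"
  have sys1: "(u has_vector_derivative (mu1 c lam - g z) * u z + g z * v z) (at z)" for z
    unfolding u_def v_def g_def p_def q_def by (rule uv_system(1)[OF c F l])
  have sys2: "(v has_vector_derivative (mu2 c lam + g z) * v z - g z * u z) (at z)" for z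
    unfolding u_def v_def g_def p_def q_def by (rule uv_system(2)[OF c F l])
  have F0: "F 0 = mat 1" using F unfolding is_fundamental_matrix_def by blast
  have p0: "p 0 = x1" "q 0 = x2" unfolding p_def q_def F0 by (simp_all add: mat_def)
  have pT: "p T = r * p 0" "q T = r * q 0" unfolding p0 using x unfolding p_def q_def M_def by simp_all
  have uT: "u T = r * u 0" and vT: "v T = r * v 0" unfolding u_def v_def pT by (simp_all add: algebra_simps)
  have mune: "mu1 c lam \<noteq> mu2 c lam"
  proof
    assume "mu1 c lam = mu2 c lam"
    then have "\<bar>Re (mu1 c lam) - Re (mu2 c lam)\<bar> = 0" by simp
    moreover have "4 * (1 / (2 * cmod lam)) > 0" using l by simp
    ultimately show False using gapc by linarith
  qed
  have nz: "u 0 \<noteq> 0 \<or> v 0 \<noteq> 0"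
  proof (rule ccontr)
    assume "\<not> (u 0 \<noteq> 0 \<or> v 0 \<noteq> 0)"
    then have "u 0 = 0" "v 0 = 0" by auto
    then have "(mu1 c lam - mu2 c lam) * p 0 = 0" "q 0 = mu2 c lam * p 0"
      unfolding u_def v_def by (auto simp: algebra_simps)
    then have "p 0 = 0" "q 0 = 0" using mune by auto
    then show False using x(1) p0 by simp
  qed
  have gb: "cmod (g z) \<le> \<epsilon>" for z
  proof -
    have "cmod (g z) = \<bar>cos (f z)\<bar> / (2 * cmod lam)" unfolding g_def by (simp add: norm_divide)
    also have "\<dots> \<le> 1 / (2 * cmod lam)" using l by (intro divide_right_mono) auto
    finally show ?thesis unfolding \<epsilon>_def .
  qed
  show ?thesis
  proof (cases "Re (mu1 c lam) > Re (mu2 c lam)")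
    case True
    have gap: "Re (mu1 c lam) - Re (mu2 c lam) > 4 * \<epsilon>" using gapc True unfolding \<epsilon>_def by simp
    show ?thesis using cone_lemma[OF sys1 sys2 gb gap T uT vT nz rnz] unfolding \<epsilon>_def .
  next
    case False
    have gap: "Re (mu2 c lam) - Re (mu1 c lam) > 4 * \<epsilon>" using gapc False unfolding \<epsilon>_def by simp
    have d1: "(v has_vector_derivative (mu2 c lam - (- g z)) * v z + (- g z) * u z) (at z)" for z
      using sys2[of z] by (simp add: algebra_simps)
    have d2: "(u has_vector_derivative (mu1 c lam + (- g z)) * u z - (- g z) * v z) (at z)" for z
      using sys1[of z] by (simp add: algebra_simps)
    have gb': "cmod (- g z) \<le> \<epsilon>" for z using gb[of z] by simp
    show ?thesis using cone_lemma[OF d1 d2 gb' gap T vT uT _ rnz] nz unfolding \<epsilon>_def by blast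
  qed
qed



lemma sign_final:
  fixes a b T \<epsilon> L1 L2 \<alpha> :: real
  assumes T: "T > 0" and e0: "\<epsilon> \<ge> 0" and ea: "2 * \<epsilon> < \<bar>a\<bar>" and eb: "2 * \<epsilon> < \<bar>b\<bar>"
    and \<alpha>: "\<alpha> = a \<or> \<alpha> = b"
    and L1: "(\<alpha> - 2 * \<epsilon>) * T \<le> L1" "L1 \<le> (\<alpha> + 2 * \<epsilon>) * T"
    and L2: "L2 = (a + b) * T - L1"
  shows "sgn (L1 * L2) = sgn (a * b)"
proof -
  have s: "sgn x = sgn y" if "2 * \<epsilon> < \<bar>y\<bar>" "(y - 2 * \<epsilon>) * T \<le> x" "x \<le> (y + 2 * \<epsilon>) * T" for x y
  proof (cases "y > 0")
    case True
    then have "(y - 2 * \<epsilon>) * T > 0" using that T by simp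
    then show ?thesis using True that by simp
  next
    case False
    then have "y < 0" using that e0 by linarith
    then have "(y + 2 * \<epsilon>) * T < 0" using that T by (simp add: mult_neg_pos)
    then show ?thesis using \<open>y < 0\<close> that by simp
  qed
  from \<alpha> show ?thesis
  proof
    assume e: "\<alpha> = a"
    have "sgn L1 = sgn a" using s[OF ea] L1 e by simp
    moreover have "sgn L2 = sgn b" unfolding L2
      by (rule s[OF eb]) (use L1 e in \<open>simp_all add: algebra_simps\<close>)
    ultimately show ?thesis by (simp add: sgn_mult)
  next
    assume e: "\<alpha> = b"
    have "sgn L1 = sgn b" using s[OF eb] L1 e by simp
    moreover have "sgn L2 = sgn a" unfolding L2
      by (rule s[OF ea]) (use L1 e in \<open>simp_all add: algebra_simps\<close>)
    ultimately show ?thesis by (simp add: sgn_mult mult.commute)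
  qed
qed

lemma inv_lt:
  fixes x d R :: real
  assumes "x > R" "R \<ge> 1" "d > 0" "d < R"
  shows "1 / x < x / d"
proof -
  have "x > 1" using assms by simp
  then have xx: "x * x > x" by simp
  have "d < x * x" using assms xx by linarith
  then show ?thesis using assms by (simp add: field_simps)
qed

lemma floquet_props:
  fixes M :: "complex^2^2"
  shows "\<exists>r1 r2. \<forall>x. det (mat x - M) = (x - r1) * (x - r2)"
proof -
  define tr where "tr = M $ 1 $ 1 + M $ 2 $ 2"
  define dt where "dt = M $ 1 $ 1 * M $ 2 $ 2 - M $ 1 $ 2 * M $ 2 $ 1"
  define s where "s = csqrt (tr\<^sup>2 - 4 * dt)"
  have s2: "s\<^sup>2 = tr\<^sup>2 - 4 * dt" unfolding s_def by simp
  have "det (mat x - M) = (x - (tr + s) / 2) * (x - (tr - s) / 2)" for x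
  proof -
    have "(x - (tr + s) / 2) * (x - (tr - s) / 2) = x\<^sup>2 - tr * x + (tr\<^sup>2 - s\<^sup>2) / 4"
      by (simp add: field_simps power2_eq_square)
    also have "\<dots> = x\<^sup>2 - tr * x + dt" unfolding s2 by simp
    finally show ?thesis unfolding tr_def dt_def by (simp add: det_2 mat_def power2_eq_square algebra_simps)
  qed
  then show ?thesis by blast
qed



lemma Re_mu: "Re (mu1 c lam) = Re lam / (c - 1)" "Re (mu2 c lam) = Re lam / (c + 1)"
  unfolding mu1_def mu2_def by (simp_all add: Re_divide_of_real)

theorem lemma3p14:
  fixes c :: real and f :: "real \<Rightarrow> real" and T :: real
  assumes "traveling_wave c f"
    and "fundamental_period f T"
  shows "\<exists>R. \<forall>lam::complex. R < \<bar>Re lam\<bar> \<longrightarrow> sgn (G_p c f T lam) = sgn (gam c)"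
proof -
  have c: "c\<^sup>2 \<noteq> 1" using assms(1) unfolding traveling_wave_def by blast
  have T: "T > 0" using assms(2) unfolding fundamental_period_def by blast
  have cr: "c - 1 \<noteq> 0" "c + 1 \<noteq> 0" using c by (auto simp: power2_eq_square)
      (metis add.inverse_inverse add_eq_0_iff mult_minus_left mult_1 c)
  have csq: "c\<^sup>2 - 1 = (c - 1) * (c + 1)" by (simp add: power2_eq_square algebra_simps)
  define R where "R = \<bar>c\<^sup>2 - 1\<bar> + \<bar>c\<bar> + 2"
  show ?thesis
  proof (intro exI[of _ R] allI impI)
    fix lam :: complex assume lr: "R < \<bar>Re lam\<bar>"
    define x where "x = \<bar>Re lam\<bar>"
    have R1: "R \<ge> 1" unfolding R_def by simp
    have xR: "x > R" using lr unfolding x_def .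
    have x0: "x > 0" using xR R1 by simp
    have l: "lam \<noteq> 0" using x0 unfolding x_def by auto
    have xl: "x \<le> cmod lam" unfolding x_def by (rule abs_Re_le_cmod)
    obtain F where F: "is_fundamental_matrix c f lam F" using fund_exists[OF assms(1)] by blast
    define M where "M = F T"
    have mono: "monodromy c f T lam = M" unfolding M_def by (rule monodromy_eq[OF F])
    define P where "P = (\<lambda>(r1::complex, r2::complex). \<forall>x. det (mat x - M) = (x - r1) * (x - r2))"
    have fm: "floquet_multipliers c f T lam = (SOME p. P p)"
      unfolding floquet_multipliers_def mono P_def ..
    have "\<exists>p. P p" using floquet_props[of M] unfolding P_def by auto
    then have Ps: "P (SOME p. P p)" by (rule someI_ex)
    obtain r1 r2 where rr: "floquet_multipliers c f T lam = (r1, r2)" by (cases "floquet_multipliers c f T lam") auto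
    have "(SOME p. P p) = (r1, r2)" using fm rr by simp
    then have "P (r1, r2)" using Ps by simp
    then have Pr: "\<forall>x. det (mat x - M) = (x - r1) * (x - r2)" unfolding P_def by simp
    have d0: "det (mat r1 - F T) = 0" using Pr[rule_format, of r1] unfolding M_def by simp
    have "det (mat 0 - M) = r1 * r2" using Pr[rule_format, of 0] by simp
    then have prod: "r1 * r2 = det M" by (simp add: det_2 mat_def)
    have dabs: "cmod (det M) = exp (Re (A22 c lam) * T)" unfolding M_def using det_abs[OF F] T by simp
    define a where "a = Re (mu1 c lam)"
    define b where "b = Re (mu2 c lam)"
    have ab0: "Re (A22 c lam) = 2 * c * (1 / ((c - 1) * (c + 1))) * Re lam"
      unfolding A22_def gam_def csq by simp
    have ab1: "2 * c * (1 / ((c - 1) * (c + 1))) * Re lam = Re lam / (c - 1) + Re lam / (c + 1)"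
      using cr by (simp add: field_simps)
    have ab: "Re (A22 c lam) = a + b" unfolding a_def b_def Re_mu ab0 ab1 ..
    have "det M \<noteq> 0" using dabs by auto
    then have r1nz: "r1 \<noteq> 0" and r2nz: "r2 \<noteq> 0" using prod by auto
    define \<epsilon> where "\<epsilon> = 1 / (2 * cmod lam)"
    have e0: "\<epsilon> \<ge> 0" unfolding \<epsilon>_def by simp
    have e2: "2 * \<epsilon> \<le> 1 / x" unfolding \<epsilon>_def using x0 xl l by (simp add: frac_le)
    have amb: "\<bar>a - b\<bar> = 2 * (x / \<bar>c\<^sup>2 - 1\<bar>)"
    proof -
      have "a - b = 2 * (Re lam / (c\<^sup>2 - 1))" unfolding a_def b_def Re_mu csq
        using cr by (simp add: field_simps)
      then show ?thesis unfolding x_def by (simp add: abs_mult abs_divide)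
    qed
    have c2: "\<bar>c\<^sup>2 - 1\<bar> > 0" using c by simp
    have gapc: "4 * \<epsilon> < \<bar>a - b\<bar>"
    proof -
      have "1 / x < x / \<bar>c\<^sup>2 - 1\<bar>" by (rule inv_lt[OF xR R1 c2]) (simp add: R_def)
      then show ?thesis unfolding amb using e2 by linarith
    qed
    have ea: "2 * \<epsilon> < \<bar>a\<bar>"
    proof -
      have "\<bar>c - 1\<bar> > 0" using cr by simp
      moreover have "\<bar>c - 1\<bar> < R" unfolding R_def by linarith
      ultimately have "1 / x < x / \<bar>c - 1\<bar>" by (rule inv_lt[OF xR R1])
      moreover have "\<bar>a\<bar> = x / \<bar>c - 1\<bar>" unfolding a_def Re_mu x_def by (simp add: abs_divide)
      ultimately show ?thesis using e2 by linarith
    qed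
    have eb: "2 * \<epsilon> < \<bar>b\<bar>"
    proof -
      have "\<bar>c + 1\<bar> > 0" using cr by simp
      moreover have "\<bar>c + 1\<bar> < R" unfolding R_def by linarith
      ultimately have "1 / x < x / \<bar>c + 1\<bar>" by (rule inv_lt[OF xR R1])
      moreover have "\<bar>b\<bar> = x / \<bar>c + 1\<bar>" unfolding b_def Re_mu x_def by (simp add: abs_divide)
      ultimately show ?thesis using e2 by linarith
    qed
    have eig: "(exp ((a - 2 * \<epsilon>) * T) \<le> cmod r1 \<and> cmod r1 \<le> exp ((a + 2 * \<epsilon>) * T)) \<or>
         (exp ((b - 2 * \<epsilon>) * T) \<le> cmod r1 \<and> cmod r1 \<le> exp ((b + 2 * \<epsilon>) * T))"
      using eig_bound[OF c F T l _ d0 r1nz] gapc unfolding a_def b_def \<epsilon>_def by blast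
    then obtain \<alpha> where \<alpha>: "\<alpha> = a \<or> \<alpha> = b"
      and bnd: "exp ((\<alpha> - 2 * \<epsilon>) * T) \<le> cmod r1" "cmod r1 \<le> exp ((\<alpha> + 2 * \<epsilon>) * T)"
      by blast
    define L1 where "L1 = ln (cmod r1)"
    define L2 where "L2 = ln (cmod r2)"
    have r1p: "cmod r1 > 0" using r1nz by simp
    have r2p: "cmod r2 > 0" using r2nz by simp
    have L1b: "(\<alpha> - 2 * \<epsilon>) * T \<le> L1" "L1 \<le> (\<alpha> + 2 * \<epsilon>) * T"
      unfolding L1_def using bnd r1p by (metis ln_exp ln_le_cancel_iff exp_gt_zero)+
    have "cmod r1 * cmod r2 = exp ((a + b) * T)" using prod dabs ab by (simp add: norm_mult[symmetric])
    then have "ln (cmod r1 * cmod r2) = (a + b) * T" by simp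
    then have "L1 + L2 = (a + b) * T" unfolding L1_def L2_def using r1p r2p by (simp add: ln_mult)
    then have L2: "L2 = (a + b) * T - L1" by simp
    have "sgn (L1 * L2) = sgn (a * b)" by (rule sign_final[OF T e0 ea eb \<alpha> L1b L2])
    moreover have "G_p c f T lam = L1 * L2" unfolding G_p_def rr L1_def L2_def by simp
    moreover have "a * b = (Re lam)\<^sup>2 * gam c" unfolding a_def b_def Re_mu gam_def csq
      using cr by (simp add: field_simps power2_eq_square)
    moreover have "sgn ((Re lam)\<^sup>2) = 1"
    proof -
      have "(Re lam)\<^sup>2 > 0" using x0 unfolding x_def by simp
      then show ?thesis by (simp only: sgn_pos)
    qed
    ultimately show "sgn (G_p c f T lam) = sgn (gam c)" by (metis sgn_mult mult_1)
  qed
qed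

end
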